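(* Consider $\min_{x\in X}f(x)$, $f(x)=\mathbb{E}[F(x,\xi)]$, with $F:\mathcal{D}\times\Omega\to\mathbb{R}$, $\mathcal{D}\subseteq\mathbb{R}^n$ open, $X\subset\mathcal{D}$ nonempty closed convex, $F(\cdot,\xi)$ convex on $\mathcal{D}$ for all $\xi$, $\mathbb{E}[F(x,\xi)]$ finite on $\mathcal{D}$. Let $f$ be differentiable over $X$ with $L$-Lipschitz gradient and strongly convex with constant $\eta>0$, let $X$ be compact and $D=\max_{x,y\in X}\|x-y\|$, and assume $\mathbb{E}[\|w_k\|^2\mid\mathcal{F}_k]\le\nu^2$ a.s. for all $k$. Then in the cascading steplength scheme (defined in the context), $K_t$ is finite for all $t\ge0$.
   Context: Iteration: $x_{k+1}=\Pi_X(x_k-\gamma_k(\nabla f(x_k)+w_k))$, $w_k=\nabla_xF(x_k,\xi_k)-\nabla f(x_k)$, $x_0\in X$ random, $\mathcal{F}_k=\{x_0,\xi_0,\dots,\xi_{k-1}\}$, $\mathbb{E}[w_k\mid\mathcal{F}_k]=0$. Cascading steplength scheme: let $q(\gamma)=1-\eta\gamma(2-L\gamma)$, $\theta\in(0,1)$, and an initial $\gamma\in(0,\frac2L)$. Initialization: let $\ell=\min\{j: D^2>\frac{\gamma^2\theta^{2j}\nu^2}{1-q(\gamma\theta^j)}\}$, $\gamma_0=\gamma\theta^\ell$, $q_0=q(\gamma_0)$, $K_0=\max\{k\in\mathbb{Z}_+: q_0^kD^2>\frac{\gamma_0^2\nu^2}{1-q_0}\}$, $\bar K_{-1}=0$.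 For $t\ge1$: $\gamma_t=\theta\gamma_{t-1}$, $q_t=q(\gamma_t)$, and $K_t=\max\{k\in\mathbb{Z}_+: q_t^k\,2^t\big(\prod_{j=0}^{t-1}q_j^{K_j}\big)D^2>\frac{\gamma_t^2\nu^2}{1-q_t}\}$. With $\bar K_t=\sum_{j=0}^tK_j$, the stepsize is $\gamma_k=\gamma_t$ for $k=\bar K_{t-1}+1,\dots,\bar K_t$. *)

theory Defs
  imports "HOL-Analysis.Analysis"
begin

definition strongly_convex_on :: "'a::real_normed_vector set \<Rightarrow> real \<Rightarrow> ('a \<Rightarrow> real) \<Rightarrow> bool" where
  "strongly_convex_on S eta f \<longleftrightarrow>
     (\<forall>x\<in>S. \<forall>y\<in>S. \<forall>t::real. 0 \<le> t \<and> t \<le> 1 \<longrightarrow>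
        f (t *\<^sub>R x + (1 - t) *\<^sub>R y)
          \<le> t * f x + (1 - t) * f y - eta / 2 * t * (1 - t) * (norm (x - y))\<^sup>2)"

definition qf :: "real \<Rightarrow> real \<Rightarrow> real \<Rightarrow> real" where
  "qf eta L g = 1 - eta * g * (2 - L * g)"

definition ell_cond :: "real \<Rightarrow> real \<Rightarrow> real \<Rightarrow> real \<Rightarrow> real \<Rightarrow> real \<Rightarrow> nat \<Rightarrow> bool" where
  "ell_cond eta L gam theta D nu j \<longleftrightarrow>
     D\<^sup>2 > gam\<^sup>2 * theta ^ (2 * j) * nu\<^sup>2 / (1 - qf eta L (gam * theta ^ j))"

definition ell :: "real \<Rightarrow> real \<Rightarrow> real \<Rightarrow> real \<Rightarrow> real \<Rightarrow> real \<Rightarrow> nat" where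
  "ell eta L gam theta D nu = (LEAST j. ell_cond eta L gam theta D nu j)"

text \<open>gamma_t = theta^t gamma_0 = gamma theta^(ell + t).\<close>
definition gam_t :: "real \<Rightarrow> real \<Rightarrow> real \<Rightarrow> real \<Rightarrow> real \<Rightarrow> real \<Rightarrow> nat \<Rightarrow> real" where
  "gam_t eta L gam theta D nu t = gam * theta ^ (ell eta L gam theta D nu + t)"

definition q_t :: "real \<Rightarrow> real \<Rightarrow> real \<Rightarrow> real \<Rightarrow> real \<Rightarrow> real \<Rightarrow> nat \<Rightarrow> real" where
  "q_t eta L gam theta D nu t = qf eta L (gam_t eta L gam theta D nu t)"

text \<open>The set of admissible k at stage t, given P = prod_{j<t} q_j^{K_j}.
  For t = 0 (P = 1, 2^0 = 1) this is exactly the set defining K_0.\<close>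
definition Kset :: "real \<Rightarrow> real \<Rightarrow> real \<Rightarrow> real \<Rightarrow> real \<Rightarrow> real \<Rightarrow> real \<Rightarrow> nat \<Rightarrow> nat set" where
  "Kset eta L gam theta D nu P t =
     {k::nat. q_t eta L gam theta D nu t ^ k * 2 ^ t * P * D\<^sup>2
        > (gam_t eta L gam theta D nu t)\<^sup>2 * nu\<^sup>2 / (1 - q_t eta L gam theta D nu t)}"

primrec Pcasc :: "real \<Rightarrow> real \<Rightarrow> real \<Rightarrow> real \<Rightarrow> real \<Rightarrow> real \<Rightarrow> nat \<Rightarrow> real" where
  "Pcasc eta L gam theta D nu 0 = 1"
| "Pcasc eta L gam theta D nu (Suc t) =
     Pcasc eta L gam theta D nu t * q_t eta L gam theta D nu t
       ^ Max (Kset eta L gam theta D nu (Pcasc eta L gam theta D nu t) t)"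

definition Kcasc :: "real \<Rightarrow> real \<Rightarrow> real \<Rightarrow> real \<Rightarrow> real \<Rightarrow> real \<Rightarrow> nat \<Rightarrow> nat set" where
  "Kcasc eta L gam theta D nu t = Kset eta L gam theta D nu (Pcasc eta L gam theta D nu t) t"

end

theory Submission
  imports Defs
begin

lemma eta_le_L:
  fixes f :: "'a::euclidean_space \<Rightarrow> real" and gradf :: "'a \<Rightarrow> 'a"
  assumes cX: "convex X" and xX: "x\<in>X" and yX: "y\<in>X" and xy: "x\<noteq>y"
   and fd: "\<forall>x\<in>X. (f has_derivative (\<lambda>h. gradf x \<bullet> h)) (at x)"
   and lip: "\<forall>x\<in>X. \<forall>y\<in>X. norm (gradf x - gradf y) \<le> L * norm (x - y)"
   and sc: "strongly_convex_on X eta f"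
  shows "eta \<le> L"
proof -
  define d where "d = norm (x - y)"
  have dpos: "d > 0" using xy by (simp add: d_def)
  define p where "p t = y + t *\<^sub>R (x - y)" for t
  have pe: "p t = t *\<^sub>R x + (1 - t) *\<^sub>R y" for t
    by (simp add: p_def algebra_simps)
  have pX: "p t \<in> X" if "t \<in> {0..1}" for t
    using that cX xX yX unfolding pe convex_def by auto
  have pd: "(p has_derivative (\<lambda>s. s *\<^sub>R (x - y))) (at t)" for t
    unfolding p_def by (auto intro!: derivative_eq_intros)
  define \<phi> where "\<phi> t = f (p t)" for t
  have deriv: "(\<phi> has_real_derivative (gradf (p t) \<bullet> (x - y))) (at t)" if "t \<in> {0..1}" for t
  proof -
    have "((\<lambda>t. f (p t)) has_derivative (\<lambda>s. gradf (p t) \<bullet> (s *\<^sub>R (x - y)))) (at t)"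
      using diff_chain_at[OF pd, of f "\<lambda>h. gradf (p t) \<bullet> h"] fd pX[OF that]
      by (simp add: o_def)
    moreover have "(\<lambda>s. gradf (p t) \<bullet> (s *\<^sub>R (x - y))) = (*) (gradf (p t) \<bullet> (x - y))"
      by (auto simp: mult.commute)
    ultimately show ?thesis unfolding has_field_derivative_def \<phi>_def by simp
  qed
  define \<psi> where "\<psi> t = L * d^2 * t^2 / 2 - \<phi> t" for t
  have cvx: "convex_on {0..1} \<psi>"
  proof (rule convex_on_realI[where f'="\<lambda>t. L * d^2 * t - gradf (p t) \<bullet> (x - y)"])
    show "connected {0..1::real}" by simp
    fix t :: real assume t: "t \<in> {0..1}"
    show "(\<psi> has_real_derivative L * d^2 * t - gradf (p t) \<bullet> (x - y)) (at t)"
      unfolding \<psi>_def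
      by (rule derivative_eq_intros deriv[OF t] refl | simp)+
  next
    fix t s :: real assume t: "t \<in> {0..1}" and s: "s \<in> {0..1}" and ts: "t \<le> s"
    have "gradf (p s) \<bullet> (x - y) - gradf (p t) \<bullet> (x - y) = (gradf (p s) - gradf (p t)) \<bullet> (x - y)"
      by (simp add: inner_diff_left)
    also have "\<dots> \<le> norm (gradf (p s) - gradf (p t)) * d"
      unfolding d_def by (rule norm_cauchy_schwarz)
    also have "\<dots> \<le> L * norm (p s - p t) * d"
      using lip pX[OF s] pX[OF t] dpos by (intro mult_right_mono) auto
    also have "p s - p t = (s - t) *\<^sub>R (x - y)" by (simp add: p_def algebra_simps)
    also have "L * norm ((s - t) *\<^sub>R (x - y)) * d = L * d^2 * s - L * d^2 * t"
    proof -
      have "norm ((s - t) *\<^sub>R (x - y)) = (s - t) * d" using ts by (simp add: d_def)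
      thus ?thesis by (simp only: power2_eq_square) (simp add: algebra_simps)
    qed
    finally show "L * d^2 * t - gradf (p t) \<bullet> (x - y) \<le> L * d^2 * s - gradf (p s) \<bullet> (x - y)"
      by linarith
  qed
  have "\<psi> ((1 - 1/2) *\<^sub>R 0 + (1/2) *\<^sub>R 1) \<le> (1 - 1/2) * \<psi> 0 + (1/2) * \<psi> 1"
    by (rule convex_onD[OF cvx]) auto
  hence A: "L * d^2 / 8 - f ((1/2) *\<^sub>R x + (1/2) *\<^sub>R y) \<le> (L * d^2 / 2 - f x - f y) / 2"
    by (simp add: \<psi>_def \<phi>_def pe power_divide field_simps)
  have B0: "\<forall>t. 0 \<le> t \<and> t \<le> 1 \<longrightarrow> f (t *\<^sub>R x + (1 - t) *\<^sub>R y) \<le> t * f x + (1 - t) * f y - eta / 2 * t * (1 - t) * (norm (x - y))\<^sup>2"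
    using sc xX yX unfolding strongly_convex_on_def by blast
  have B: "f ((1/2) *\<^sub>R x + (1/2) *\<^sub>R y) \<le> (1/2) * f x + (1/2) * f y - eta / 8 * (norm (x - y))\<^sup>2"
    using B0[rule_format, of "1/2"] by simp
  have "eta * d^2 \<le> L * d^2" using A B by (simp add: d_def)
  thus ?thesis using dpos by (simp add: mult_le_cancel_right)
qed


lemma one_minus_qf: "1 - qf eta L g = eta * g * (2 - L * g)"
  by (simp add: qf_def)

lemma qf_bounds:
  assumes "0 < eta" "eta \<le> L" "0 < g" "g < 2 / L" "L > 0"
  shows "-1 < qf eta L g \<and> qf eta L g < 1"
proof -
  have Lg: "L * g < 2" using assms by (simp add: field_simps)
  have pos: "g * (2 - L * g) > 0" using assms Lg by simp
  have "eta * (g * (2 - L * g)) \<le> L * (g * (2 - L * g))"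
    using assms pos by (intro mult_right_mono) auto
  also have "\<dots> \<le> 1" using sum_squares_ge_zero[of "L*g - 1" 0]
    by (simp add: power2_eq_square algebra_simps)
  finally have "eta * g * (2 - L * g) \<le> 1" by (simp add: mult.assoc)
  moreover have "eta * g * (2 - L * g) > 0" using pos assms by (simp add: mult.assoc)
  ultimately show ?thesis using one_minus_qf[of eta L g] by linarith
qed

lemma finite_pow_set:
  fixes q C R :: real
  assumes "-1 < q" "q < 1" "R > 0"
  shows "finite {k::nat. q ^ k * C > R}"
proof -
  have "(\<lambda>n. \<bar>q\<bar> ^ n * \<bar>C\<bar>) \<longlonglongrightarrow> 0 * \<bar>C\<bar>"
    using assms by (intro tendsto_mult LIMSEQ_realpow_zero tendsto_const) auto
  hence "eventually (\<lambda>n. \<bar>q\<bar> ^ n * \<bar>C\<bar> < R) sequentially"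
    using assms(3) by (simp add: order_tendstoD(2))
  then obtain N where N: "\<And>n. n \<ge> N \<Longrightarrow> \<bar>q\<bar> ^ n * \<bar>C\<bar> < R"
    unfolding eventually_sequentially by blast
  have "{k::nat. q ^ k * C > R} \<subseteq> {..<N}"
  proof
    fix k assume k: "k \<in> {k::nat. q ^ k * C > R}"
    show "k \<in> {..<N}"
    proof (rule ccontr)
      assume "k \<notin> {..<N}"
      hence "\<bar>q\<bar> ^ k * \<bar>C\<bar> < R" using N by simp
      moreover have "q ^ k * C \<le> \<bar>q ^ k * C\<bar>" by simp
      moreover have "\<bar>q ^ k * C\<bar> = \<bar>q\<bar> ^ k * \<bar>C\<bar>" by (simp add: abs_mult power_abs)
      ultimately show False using k by simp
    qed
  qed
  thus ?thesis using finite_subset by blast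
qed

lemma ratio_le:
  fixes a theta L eta nu :: real
  assumes "0 < a" "L * a < 2" "0 < theta" "theta < 1" "L > 0" "eta > 0"
  shows "(theta * a)^2 * nu^2 / (eta * (theta * a) * (2 - L * (theta * a)))
     \<le> 2 * (a^2 * nu^2 / (eta * a * (2 - L * a)))"
proof -
  have d1: "2 - L * a > 0" using assms by simp
  have d2: "2 - L * (theta * a) \<ge> 2 - L * a"
    using assms by (simp add: mult_left_mono mult_right_le_one_le)
  have d3: "2 - L * (theta * a) > 0" using d1 d2 by linarith
  have l: "(theta * a)^2 * nu^2 / (eta * (theta * a) * (2 - L * (theta * a)))
      = theta * (a * nu^2 / eta) / (2 - L * (theta * a))"
    using assms d1 d3 by (simp add: power2_eq_square field_simps)
  have r: "2 * (a^2 * nu^2 / (eta * a * (2 - L * a))) = 2 * (a * nu^2 / eta) / (2 - L * a)"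
    using assms d1 by (simp add: power2_eq_square field_simps)
  have c: "a * nu^2 / eta \<ge> 0" using assms by simp
  have "theta * (a * nu^2 / eta) / (2 - L * (theta * a)) \<le> theta * (a * nu^2 / eta) / (2 - L * a)"
    using d1 d2 d3 c assms by (intro divide_left_mono mult_pos_pos) auto
  also have "\<dots> \<le> 2 * (a * nu^2 / eta) / (2 - L * a)"
    using d1 c assms by (intro divide_right_mono mult_right_mono) auto
  finally show ?thesis using l r by simp
qed

theorem proposition6:
  fixes f :: "'a::euclidean_space \<Rightarrow> real"
    and gradf :: "'a \<Rightarrow> 'a"
    and Dom X :: "'a set"
    and L eta gam theta nu D :: real
  assumes Dom_open: "open Dom"
    and X_sub: "X \<subseteq> Dom"
    and X_ne: "X \<noteq> {}"
    and X_closed: "closed X"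
    and X_convex: "convex X"
    and X_compact: "compact X"
    and f_convex: "convex_on Dom f"
    and f_grad: "\<forall>x\<in>X. (f has_derivative (\<lambda>h. gradf x \<bullet> h)) (at x)"
    and L_pos: "L > 0"
    and grad_lip: "\<forall>x\<in>X. \<forall>y\<in>X. norm (gradf x - gradf y) \<le> L * norm (x - y)"
    and eta_pos: "eta > 0"
    and f_strong: "strongly_convex_on X eta f"
    and D_def: "D = diameter X"
    and D_pos: "D > 0"
    and nu_pos: "nu > 0"
    and theta: "0 < theta" "theta < 1"
    and gam: "0 < gam" "gam < 2 / L"
  shows "(\<exists>j. ell_cond eta L gam theta D nu j)
       \<and> (\<forall>t. finite (Kcasc eta L gam theta D nu t) \<and> Kcasc eta L gam theta D nu t \<noteq> {})"
proof -
  obtain x y where xy: "x \<in> X" "y \<in> X" "x \<noteq> y"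
  proof (rule ccontr)
    assume "\<not> thesis"
    hence all: "\<forall>x\<in>X. \<forall>y\<in>X. x = y" using that by blast
    obtain a where "a \<in> X" using X_ne by blast
    hence "X = {a}" using all by blast
    thus False using D_pos D_def by simp
  qed
  have etaL: "eta \<le> L"
    by (rule eta_le_L[OF X_convex xy f_grad grad_lip f_strong])
  have Lgam: "L * gam < 2" using gam L_pos by (simp add: field_simps)
  have ex: "\<exists>j. ell_cond eta L gam theta D nu j"
  proof -
    define c where "c = D^2 * eta * (2 - L * gam) / (gam * nu^2)"
    have cpos: "c > 0" unfolding c_def using D_pos eta_pos Lgam gam nu_pos by simp
    have "eventually (\<lambda>n. theta ^ n < c) sequentially"
      using LIMSEQ_realpow_zero[of theta] theta cpos by (intro order_tendstoD(2)) auto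
    then obtain j where j: "theta ^ j < c" unfolding eventually_sequentially by blast
    define g where "g = gam * theta ^ j"
    have gpos: "g > 0" using gam theta by (simp add: g_def)
    have gle: "g \<le> gam" using gam theta by (simp add: g_def power_le_one mult_right_le_one_le)
    have Lg: "2 - L * g \<ge> 2 - L * gam" using gle L_pos by (simp add: mult_left_mono)
    have "g * nu^2 < D^2 * eta * (2 - L * gam)"
      using j gam nu_pos unfolding c_def g_def by (simp add: field_simps)
    also have "\<dots> \<le> D^2 * eta * (2 - L * g)"
      using Lg D_pos eta_pos by (intro mult_left_mono) auto
    finally have key: "g * nu^2 < D^2 * eta * (2 - L * g)" .
    have den: "eta * g * (2 - L * g) > 0" using gpos eta_pos Lg Lgam by simp
    have "gam^2 * theta^(2*j) * nu^2 = g * (g * nu^2)"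
      by (simp add: g_def power_mult power2_eq_square mult_ac)
    also have "\<dots> < g * (D^2 * eta * (2 - L * g))" using key gpos by simp
    also have "\<dots> = D^2 * (eta * g * (2 - L * g))" by (simp add: mult_ac)
    finally have "gam^2 * theta^(2*j) * nu^2 / (eta * g * (2 - L * g)) < D^2"
      using den by (simp add: divide_less_eq)
    hence "ell_cond eta L gam theta D nu j"
      unfolding ell_cond_def one_minus_qf g_def[symmetric] by simp
    thus ?thesis by blast
  qed
  have ell0: "ell_cond eta L gam theta D nu (ell eta L gam theta D nu)"
    unfolding ell_def using ex by (rule LeastI_ex)
  have gt_pos: "gam_t eta L gam theta D nu t > 0" for t
    using gam theta by (simp add: gam_t_def)
  have gt_le: "gam_t eta L gam theta D nu t \<le> gam" for t
    using gam theta by (simp add: gam_t_def power_le_one mult_right_le_one_le)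
  have gt_lt: "gam_t eta L gam theta D nu t < 2 / L" for t using gt_le[of t] gam by linarith
  have gt_Lt: "L * gam_t eta L gam theta D nu t < 2" for t
    using gt_lt[of t] L_pos by (simp add: field_simps)
  have gt_Suc: "gam_t eta L gam theta D nu (Suc t) = theta * gam_t eta L gam theta D nu t" for t
    by (simp add: gam_t_def mult_ac)
  have qb: "-1 < q_t eta L gam theta D nu t \<and> q_t eta L gam theta D nu t < 1" for t
    unfolding q_t_def using qf_bounds[OF eta_pos etaL gt_pos gt_lt L_pos] by blast
  define R where "R t = (gam_t eta L gam theta D nu t)\<^sup>2 * nu\<^sup>2 / (1 - q_t eta L gam theta D nu t)" for t
  have Rpos: "R t > 0" for t
    unfolding R_def using qb[of t] gt_pos[of t] nu_pos by simp
  have fin: "finite (Kset eta L gam theta D nu P t)" for P t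
  proof -
    have "Kset eta L gam theta D nu P t
        = {k. q_t eta L gam theta D nu t ^ k * (2 ^ t * P * D\<^sup>2) > R t}"
      unfolding Kset_def R_def by (simp add: mult_ac)
    thus ?thesis using finite_pow_set[of "q_t eta L gam theta D nu t" "R t"] qb Rpos by auto
  qed
  have Rstep: "R (Suc t) \<le> 2 * R t" for t
    unfolding R_def q_t_def one_minus_qf gt_Suc
    using ratio_le[OF gt_pos gt_Lt theta L_pos eta_pos, of t nu] by simp
  have ne: "0 \<in> Kcasc eta L gam theta D nu t" for t
  proof (induction t)
    case 0
    have h: "theta ^ (2*k) = (theta^k)^2" for k by (metis power_mult mult.commute)
    show ?case using ell0
      unfolding Kcasc_def Kset_def ell_cond_def gam_t_def q_t_def
      by (simp add: h power_mult_distrib mult_ac)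
  next
    case (Suc t)
    let ?P = "Pcasc eta L gam theta D nu t"
    let ?K = "Kset eta L gam theta D nu ?P t"
    have mem: "k \<in> Kset eta L gam theta D nu P t \<longleftrightarrow>
        q_t eta L gam theta D nu t ^ k * 2 ^ t * P * D\<^sup>2 > R t" for k P t
      unfolding Kset_def R_def by simp
    have M: "Max ?K \<in> ?K" using Suc fin[of ?P t]
      unfolding Kcasc_def by (intro Max_in) auto
    hence "q_t eta L gam theta D nu t ^ Max ?K * 2 ^ t * ?P * D\<^sup>2 > R t"
      by (simp only: mem)
    hence "2 * (q_t eta L gam theta D nu t ^ Max ?K * 2 ^ t * ?P * D\<^sup>2) > R (Suc t)"
      using Rstep[of t] by linarith
    hence "q_t eta L gam theta D nu (Suc t) ^ 0 * 2 ^ Suc t * (?P * q_t eta L gam theta D nu t ^ Max ?K) * D\<^sup>2 > R (Suc t)"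
      by (simp add: mult_ac)
    thus ?case
      unfolding Kcasc_def Pcasc.simps by (simp only: mem)
  qed
  show ?thesis using ex ne fin unfolding Kcasc_def by blast
qed

end
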